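(* Let $\omega:\Gamma^2\to\Gamma$ be a group morphism and $h\in\Gamma$, and suppose there is a map $b:\{0,1\}^*\to\Gamma$ with $b(u)=h\cdot\omega(b(u0),b(u1))$ for all $u\in\{0,1\}^*$. Then $G(\omega)\cong G(\mathrm{ad}(h)\circ\omega)$.
   Context: $\mathrm{ad}(h)(g)=hgh^{-1}$. $\{0,1\}^*$ denotes the finite words over $\{0,1\}$; $\mathfrak C=\{0,1\}^{\mathbb N}$. A finite complete prefix code is a finite set $\{t_1,\dots,t_n\}\subset\{0,1\}^*$ such that every $x\in\mathfrak C$ has exactly one $t_i$ as prefix. Thompson's group $V$ is the group of homeomorphisms $v$ of $\mathfrak C$ for which there exist finite complete prefix codes $\{t_i\},\{s_i\}$ and a permutation $\sigma$ with $v(t_iw)=s_{\sigma(i)}w$. For a group morphism $\omega:\Gamma^2\to\Gamma$, $K(\omega)$ is the group of maps $a:\{0,1\}^*\to\Gamma$ (pointwise product) with $a(u)=\omega(a(u0),a(u1))$ for all $u$; $V$ acts on it by $\pi(v)(a)(s_{\sigma(i)}u)=a(t_iu)$ for all $i$, $u$ (determining $\pi(v)(a)\in K(\omega)$ uniquely); $G(\omega):=K(\omega)\rtimes V$ with $vav^{-1}=\pi(v)(a)$. *)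

theory Defs
  imports "HOL-Algebra.Algebra" "HOL-Analysis.Analysis"
begin

text \<open>Finite words over {0,1} are bool lists (False = 0, True = 1);
  the Cantor space is nat => bool.\<close>

definition conc :: "bool list \<Rightarrow> (nat \<Rightarrow> bool) \<Rightarrow> (nat \<Rightarrow> bool)" where
  "conc t x = (\<lambda>k. if k < length t then t ! k else x (k - length t))"

definition has_prefix :: "(nat \<Rightarrow> bool) \<Rightarrow> bool list \<Rightarrow> bool" where
  "has_prefix x t \<longleftrightarrow> (\<forall>k < length t. x k = t ! k)"

definition complete_prefix_code :: "bool list set \<Rightarrow> bool" where
  "complete_prefix_code T \<longleftrightarrow> finite T \<and> (\<forall>x. \<exists>!t. t \<in> T \<and> has_prefix x t)"

definition V_rep :: "((nat \<Rightarrow> bool) \<Rightarrow> (nat \<Rightarrow> bool)) \<Rightarrow> bool list list \<Rightarrow> bool list list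
    \<Rightarrow> (nat \<Rightarrow> nat) \<Rightarrow> bool" where
  "V_rep v ts ss \<sigma> \<longleftrightarrow> length ts = length ss \<and> distinct ts \<and> distinct ss
     \<and> complete_prefix_code (set ts) \<and> complete_prefix_code (set ss)
     \<and> \<sigma> permutes {..<length ts}
     \<and> (\<forall>i < length ts. \<forall>w. v (conc (ts ! i) w) = conc (ss ! \<sigma> i) w)"

definition V_set :: "((nat \<Rightarrow> bool) \<Rightarrow> (nat \<Rightarrow> bool)) set" where
  "V_set = {v. (\<exists>v'. homeomorphism UNIV UNIV v v') \<and> (\<exists>ts ss \<sigma>. V_rep v ts ss \<sigma>)}"

definition ThompsonV :: "((nat \<Rightarrow> bool) \<Rightarrow> (nat \<Rightarrow> bool)) monoid" where
  "ThompsonV = \<lparr>partial_object.carrier = V_set, monoid.mult = (\<lambda>v w. v \<circ> w), monoid.one = id\<rparr>"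

definition K_set :: "('g, 'm) monoid_scheme \<Rightarrow> ('g \<times> 'g \<Rightarrow> 'g) \<Rightarrow> (bool list \<Rightarrow> 'g) set" where
  "K_set \<Gamma> \<omega> = {a. (\<forall>u. a u \<in> carrier \<Gamma>) \<and>
      (\<forall>u. a u = \<omega> (a (u @ [False]), a (u @ [True])))}"

definition pi_act :: "('g, 'm) monoid_scheme \<Rightarrow> ('g \<times> 'g \<Rightarrow> 'g)
    \<Rightarrow> ((nat \<Rightarrow> bool) \<Rightarrow> (nat \<Rightarrow> bool)) \<Rightarrow> (bool list \<Rightarrow> 'g) \<Rightarrow> (bool list \<Rightarrow> 'g)" where
  "pi_act \<Gamma> \<omega> v a = (THE b. b \<in> K_set \<Gamma> \<omega> \<and> (\<exists>ts ss \<sigma>. V_rep v ts ss \<sigma> \<and>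
      (\<forall>i < length ts. \<forall>u. b (ss ! \<sigma> i @ u) = a (ts ! i @ u))))"

definition G_grp :: "('g, 'm) monoid_scheme \<Rightarrow> ('g \<times> 'g \<Rightarrow> 'g)
    \<Rightarrow> ((bool list \<Rightarrow> 'g) \<times> ((nat \<Rightarrow> bool) \<Rightarrow> (nat \<Rightarrow> bool))) monoid" where
  "G_grp \<Gamma> \<omega> = \<lparr>partial_object.carrier = K_set \<Gamma> \<omega> \<times> V_set,
     monoid.mult = (\<lambda>(a, v) (b, w). (\<lambda>u. a u \<otimes>\<^bsub>\<Gamma>\<^esub> pi_act \<Gamma> \<omega> v b u, v \<circ> w)),
     monoid.one = (\<lambda>u. \<one>\<^bsub>\<Gamma>\<^esub>, id)\<rparr>"

end

theory Submission
  imports Defs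
begin

lemma conc_append: "conc (p @ q) x = conc p (conc q x)"
  unfolding conc_def by (auto simp: nth_append fun_eq_iff)

lemma conc_inj:
  assumes "\<forall>x. conc p x = conc q x" shows "p = q"
proof -
  have len: "length p = length q"
  proof (rule ccontr)
    assume ne: "length p \<noteq> length q"
    show False
    proof (cases "length p < length q")
      case True
      define x where "x = (\<lambda>k::nat. \<not> q ! length p)"
      have "conc p x (length p) = conc q x (length p)" using assms by simp
      thus False using True unfolding conc_def x_def by simp
    next
      case False
      with ne have lt: "length q < length p" by simp
      define x where "x = (\<lambda>k::nat. \<not> p ! length q)"
      have "conc p x (length q) = conc q x (length q)" using assms by simp
      thus False using lt unfolding conc_def x_def by simp
    qed
  qed
  show ?thesis
  proof (rule nth_equalityI)
    show "length p = length q" by fact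
    fix i assume "i < length p"
    have "conc p (\<lambda>_. False) i = conc q (\<lambda>_. False) i" using assms by simp
    thus "p ! i = q ! i" using \<open>i < length p\<close> len unfolding conc_def by simp
  qed
qed

definition pre :: "((nat \<Rightarrow> bool) \<Rightarrow> (nat \<Rightarrow> bool)) \<Rightarrow> bool list \<Rightarrow> bool list" where
  "pre v u = (THE p. \<forall>x. v (conc p x) = conc u x)"

lemma pre_eq:
  assumes "inj v" "\<forall>x. v (conc p x) = conc u x" shows "pre v u = p"
  unfolding pre_def
proof (rule the_equality)
  show "\<forall>x. v (conc p x) = conc u x" by fact
  fix q assume "\<forall>x. v (conc q x) = conc u x"
  with assms have "\<forall>x. conc q x = conc p x" by (metis injD)
  thus "q = p" by (rule conc_inj)
qed

definition good where
  "good v N M \<longleftrightarrow> inj v \<and> (\<forall>u. N \<le> length u \<longrightarrow> (\<forall>x. v (conc (pre v u) x) = conc u x) \<and> length u \<le> length (pre v u) + M)"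

lemma good_append:
  assumes "good v N M" "N \<le> length u" shows "pre v (u @ w) = pre v u @ w"
proof -
  from assms have i: "inj v" and h: "\<forall>x. v (conc (pre v u) x) = conc u x" unfolding good_def by auto
  show ?thesis
    by (rule pre_eq[OF i]) (simp add: conc_append h)
qed

lemma good_comp:
  assumes "good v N1 M1" "good w N2 M2"
  shows "good (v \<circ> w) (N1 + N2 + M1) (M1 + M2)"
    and "N1 + N2 + M1 \<le> length u \<Longrightarrow> pre (v \<circ> w) u = pre w (pre v u)"
proof -
  have iv: "inj v" "inj w" using assms unfolding good_def by auto
  have ivw: "inj (v \<circ> w)" using iv by (simp add: inj_compose)
  have key: "(\<forall>x. (v \<circ> w) (conc (pre (v \<circ> w) u) x) = conc u x) \<and> length u \<le> length (pre (v \<circ> w) u) + (M1 + M2)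
     \<and> pre (v \<circ> w) u = pre w (pre v u)"
    if lu: "N1 + N2 + M1 \<le> length u" for u
  proof -
    define p where "p = pre v u"
    have hp: "\<forall>x. v (conc p x) = conc u x" "length u \<le> length p + M1"
      using assms(1) lu unfolding good_def p_def by auto
    have lp: "N2 \<le> length p" using hp(2) lu by simp
    define q where "q = pre w p"
    have hq: "\<forall>x. w (conc q x) = conc p x" "length p \<le> length q + M2"
      using assms(2) lp unfolding good_def q_def by auto
    have e: "\<forall>x. (v \<circ> w) (conc q x) = conc u x" using hp hq by simp
    have "pre (v \<circ> w) u = q" by (rule pre_eq[OF ivw e])
    thus ?thesis using e hp hq p_def q_def by auto
  qed
  show "good (v \<circ> w) (N1 + N2 + M1) (M1 + M2)" unfolding good_def using ivw key by blast
  show "N1 + N2 + M1 \<le> length u \<Longrightarrow> pre (v \<circ> w) u = pre w (pre v u)" using key by blast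
qed

definition Nc :: "bool list list \<Rightarrow> nat" where "Nc ss = sum_list (map length ss)"

lemma code_decomp:
  assumes "complete_prefix_code S" "\<forall>s\<in>S. length s \<le> length u"
  shows "\<exists>s\<in>S. \<exists>w. u = s @ w"
proof -
  define x where "x = conc u (\<lambda>_. False)"
  obtain s where s: "s \<in> S" "has_prefix x s" using assms(1) unfolding complete_prefix_code_def by blast
  have ls: "length s \<le> length u" using assms(2) s(1) by blast
  have "take (length s) u = s"
  proof (rule nth_equalityI)
    show "length (take (length s) u) = length s" using ls by simp
    fix i assume "i < length (take (length s) u)"
    hence i: "i < length s" by simp
    have "x i = s ! i" using s(2) i unfolding has_prefix_def by blast
    thus "take (length s) u ! i = s ! i" using i ls unfolding x_def conc_def by simp
  qed
  hence "u = s @ drop (length s) u" by (metis append_take_drop_id)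
  thus ?thesis using s(1) by blast
qed

lemma rep_decomp:
  assumes "V_rep v ts ss \<sigma>" "Nc ss \<le> length u"
  shows "\<exists>i<length ts. \<exists>w. u = ss ! \<sigma> i @ w"
proof -
  have c: "complete_prefix_code (set ss)" and l: "length ts = length ss"
    and p: "\<sigma> permutes {..<length ts}" using assms(1) unfolding V_rep_def by auto
  have "\<forall>s\<in>set ss. length s \<le> length u"
  proof
    fix s assume "s \<in> set ss"
    hence "length s \<le> Nc ss" unfolding Nc_def by (simp add: member_le_sum_list)
    thus "length s \<le> length u" using assms(2) by simp
  qed
  then obtain s w where sw: "s \<in> set ss" "u = s @ w" using code_decomp[OF c] by blast
  obtain j where j: "j < length ss" "s = ss ! j" using sw(1) by (metis in_set_conv_nth)
  obtain i where i: "\<sigma> i = j" using p unfolding permutes_def by metis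
  have "i < length ts"
  proof (rule ccontr)
    assume "\<not> i < length ts"
    hence "\<sigma> i = i" using p unfolding permutes_def by auto
    thus False using i j l \<open>\<not> i < length ts\<close> by simp
  qed
  thus ?thesis using i j sw by blast
qed

lemma rep_pre:
  assumes "V_rep v ts ss \<sigma>" "inj v" "i < length ts"
  shows "pre v (ss ! \<sigma> i @ w) = ts ! i @ w"
proof (rule pre_eq[OF assms(2)])
  have h: "\<forall>w. v (conc (ts ! i) w) = conc (ss ! \<sigma> i) w" using assms(1,3) unfolding V_rep_def by blast
  show "\<forall>x. v (conc (ts ! i @ w) x) = conc (ss ! \<sigma> i @ w) x"
    by (simp add: conc_append h)
qed

lemma V_inj: assumes "v \<in> V_set" shows "inj v"
proof -
  obtain v' where "homeomorphism UNIV UNIV v v'" using assms unfolding V_set_def by blast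
  hence "\<forall>x. v' (v x) = x" unfolding homeomorphism_def by simp
  thus ?thesis by (metis injI)
qed

lemma V_good:
  assumes "v \<in> V_set" "V_rep v ts ss \<sigma>"
  shows "good v (Nc ss) (Nc ss)"
proof -
  have iv: "inj v" using V_inj assms(1) .
  have "(\<forall>x. v (conc (pre v u) x) = conc u x) \<and> length u \<le> length (pre v u) + Nc ss"
    if lu: "Nc ss \<le> length u" for u
  proof
    obtain i w where iw: "i < length ts" "u = ss ! \<sigma> i @ w" using rep_decomp[OF assms(2) lu] by blast
    have pe: "pre v u = ts ! i @ w" using rep_pre[OF assms(2) iv iw(1)] iw(2) by simp
    have h: "\<forall>w. v (conc (ts ! i) w) = conc (ss ! \<sigma> i) w" using assms(2) iw(1) unfolding V_rep_def by blast
    show "\<forall>x. v (conc (pre v u) x) = conc u x" using pe iw(2) h by (simp add: conc_append)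
    have "\<sigma> i < length ss" using assms(2) iw(1) unfolding V_rep_def by (metis lessThan_iff permutes_in_image)
    hence "length (ss ! \<sigma> i) \<le> Nc ss" unfolding Nc_def by (simp add: member_le_sum_list)
    thus "length u \<le> length (pre v u) + Nc ss" using pe iw(2) by simp
  qed
  thus ?thesis unfolding good_def using iv by blast
qed


function extw :: "('g \<times> 'g \<Rightarrow> 'g) \<Rightarrow> nat \<Rightarrow> (bool list \<Rightarrow> 'g) \<Rightarrow> bool list \<Rightarrow> 'g" where
  "extw \<rho> N g u = (if N \<le> length u then g u else \<rho> (extw \<rho> N g (u @ [False]), extw \<rho> N g (u @ [True])))"
  by auto
termination by (relation "Wellfounded.measure (\<lambda>(\<rho>, N, g, u). N - length u)") auto

declare extw.simps[simp del]

lemma down_induct: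
  assumes "\<And>u. N \<le> length u \<Longrightarrow> P u"
    and "\<And>u. P (u @ [False]) \<Longrightarrow> P (u @ [True]) \<Longrightarrow> P u"
  shows "P u"
proof (induction "N - length u" arbitrary: u)
  case 0
  then show ?case using assms(1) by simp
next
  case (Suc k)
  show ?case
  proof (cases "N \<le> length u")
    case True then show ?thesis using assms(1) by simp
  next
    case False
    have "P (u @ [b])" for b using Suc by simp
    then show ?thesis using assms(2) by blast
  qed
qed

definition recs :: "('g \<times> 'g \<Rightarrow> 'g) \<Rightarrow> (bool list \<Rightarrow> 'g) \<Rightarrow> bool" where
  "recs \<rho> f \<longleftrightarrow> (\<forall>u. f u = \<rho> (f (u @ [False]), f (u @ [True])))"

lemma extw_recs:
  assumes "\<forall>u. N \<le> length u \<longrightarrow> g u = \<rho> (g (u @ [False]), g (u @ [True]))"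
  shows "recs \<rho> (extw \<rho> N g)" and "N \<le> length u \<Longrightarrow> extw \<rho> N g u = g u"
proof -
  show "N \<le> length u \<Longrightarrow> extw \<rho> N g u = g u" by (subst extw.simps) simp
  show "recs \<rho> (extw \<rho> N g)" unfolding recs_def
  proof
    fix u
    show "extw \<rho> N g u = \<rho> (extw \<rho> N g (u @ [False]), extw \<rho> N g (u @ [True]))"
    proof (cases "N \<le> length u")
      case True
      have e: "extw \<rho> N g w = g w" if "N \<le> length w" for w by (subst extw.simps) (simp add: that)
      have "N \<le> length (u @ [b])" for b using True by simp
      then show ?thesis using assms True e by metis
    next
      case False
      then show ?thesis by (subst extw.simps) simp
    qed
  qed
qed

lemma recs_unique:
  assumes "recs \<rho> f" "recs \<rho> f'" "\<forall>u. N \<le> length u \<longrightarrow> f u = f' u"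
  shows "f = f'"
proof
  fix u show "f u = f' u"
  proof (rule down_induct[where N=N])
    fix u :: "bool list" assume "N \<le> length u" thus "f u = f' u" using assms(3) by blast
  next
    fix u assume a: "f (u @ [False]) = f' (u @ [False])" "f (u @ [True]) = f' (u @ [True])"
    have "f u = \<rho> (f (u @ [False]), f (u @ [True]))" using assms(1) unfolding recs_def by blast
    also have "\<dots> = \<rho> (f' (u @ [False]), f' (u @ [True]))" using a by simp
    also have "\<dots> = f' u" using assms(2) unfolding recs_def by (metis (no_types))
    finally show "f u = f' u" .
  qed
qed

lemma recs_closed:
  assumes "recs \<rho> f" "\<forall>u. N \<le> length u \<longrightarrow> f u \<in> S" "\<forall>x y. x \<in> S \<longrightarrow> y \<in> S \<longrightarrow> \<rho> (x, y) \<in> S"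
  shows "f u \<in> S"
proof (rule down_induct[where N=N])
  fix u :: "bool list" assume "N \<le> length u" thus "f u \<in> S" using assms(2) by blast
next
  fix u assume a: "f (u @ [False]) \<in> S" "f (u @ [True]) \<in> S"
  have "f u = \<rho> (f (u @ [False]), f (u @ [True]))" using assms(1) unfolding recs_def by blast
  thus "f u \<in> S" using a assms(3) by simp
qed

lemma K_set_iff: "a \<in> K_set \<Gamma> \<omega> \<longleftrightarrow> (\<forall>u. a u \<in> carrier \<Gamma>) \<and> recs \<omega> a"
  unfolding K_set_def recs_def by simp

lemma shifted_deep:
  assumes "V_rep v ts ss \<sigma>" "inj v"
    "\<forall>i < length ts. \<forall>u. f (ss ! \<sigma> i @ u) = a (ts ! i @ u)"
    "Nc ss \<le> length u"
  shows "f u = a (pre v u)"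
proof -
  obtain i w where iw: "i < length ts" "u = ss ! \<sigma> i @ w" using rep_decomp[OF assms(1,4)] by blast
  have pe: "pre v u = ts ! i @ w" using rep_pre[OF assms(1,2) iw(1)] iw(2) by simp
  show ?thesis using assms(3) iw pe by simp
qed

lemma pi_act_props:
  assumes cl: "\<forall>x y. x \<in> carrier \<Gamma> \<longrightarrow> y \<in> carrier \<Gamma> \<longrightarrow> \<omega> (x, y) \<in> carrier \<Gamma>"
    and a: "a \<in> K_set \<Gamma> \<omega>" and v: "v \<in> V_set"
  shows "pi_act \<Gamma> \<omega> v a \<in> K_set \<Gamma> \<omega>"
    and "\<exists>N. \<forall>u. N \<le> length u \<longrightarrow> pi_act \<Gamma> \<omega> v a u = a (pre v u)"
proof -
  obtain ts ss \<sigma> where rep: "V_rep v ts ss \<sigma>" using v unfolding V_set_def by blast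
  have iv: "inj v" using V_inj v .
  define N where "N = Nc ss"
  have gd: "good v N N" unfolding N_def using V_good[OF v rep] .
  have aK: "\<forall>u. a u \<in> carrier \<Gamma>" "recs \<omega> a" using a by (auto simp: K_set_iff)
  define g where "g = (\<lambda>u. a (pre v u))"
  have grec: "\<forall>u. N \<le> length u \<longrightarrow> g u = \<omega> (g (u @ [False]), g (u @ [True]))"
  proof (intro allI impI)
    fix u :: "bool list" assume "N \<le> length u"
    hence "pre v (u @ [b]) = pre v u @ [b]" for b using good_append[OF gd] by blast
    thus "g u = \<omega> (g (u @ [False]), g (u @ [True]))" unfolding g_def using aK(2) unfolding recs_def by metis
  qed
  define f where "f = extw \<omega> N g"
  have fr: "recs \<omega> f" unfolding f_def by (rule extw_recs(1)[OF grec])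
  have fd: "\<forall>u. N \<le> length u \<longrightarrow> f u = a (pre v u)" unfolding f_def using extw_recs(2)[OF grec] g_def by simp
  have fc: "\<forall>u. f u \<in> carrier \<Gamma>"
  proof
    fix u show "f u \<in> carrier \<Gamma>"
      by (rule recs_closed[OF fr, where N=N]) (use fd aK cl in auto)
  qed
  have fK: "f \<in> K_set \<Gamma> \<omega>" using fr fc by (simp add: K_set_iff)
  have fs: "\<forall>i < length ts. \<forall>w. f (ss ! \<sigma> i @ w) = a (ts ! i @ w)"
  proof (intro allI impI)
    fix i w assume i: "i < length ts"
    show "f (ss ! \<sigma> i @ w) = a (ts ! i @ w)"
    proof (rule down_induct[where N=N and u=w])
      fix w :: "bool list" assume "N \<le> length w"
      hence "N \<le> length (ss ! \<sigma> i @ w)" by simp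
      thus "f (ss ! \<sigma> i @ w) = a (ts ! i @ w)" using fd rep_pre[OF rep iv i] by simp
    next
      fix w assume "f (ss ! \<sigma> i @ w @ [False]) = a (ts ! i @ w @ [False])"
        "f (ss ! \<sigma> i @ w @ [True]) = a (ts ! i @ w @ [True])"
      thus "f (ss ! \<sigma> i @ w) = a (ts ! i @ w)" using fr aK(2) unfolding recs_def
        by (metis append_assoc)
    qed
  qed
  have eq: "pi_act \<Gamma> \<omega> v a = f"
    unfolding pi_act_def
  proof (rule the_equality)
    show "f \<in> K_set \<Gamma> \<omega> \<and> (\<exists>ts ss \<sigma>. V_rep v ts ss \<sigma> \<and> (\<forall>i<length ts. \<forall>u. f (ss ! \<sigma> i @ u) = a (ts ! i @ u)))"
      using fK rep fs by blast
  next
    fix f' assume "f' \<in> K_set \<Gamma> \<omega> \<and> (\<exists>ts ss \<sigma>. V_rep v ts ss \<sigma> \<and> (\<forall>i<length ts. \<forall>u. f' (ss ! \<sigma> i @ u) = a (ts ! i @ u)))"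
    then obtain ts' ss' \<sigma>' where f': "f' \<in> K_set \<Gamma> \<omega>" "V_rep v ts' ss' \<sigma>'"
       "\<forall>i<length ts'. \<forall>u. f' (ss' ! \<sigma>' i @ u) = a (ts' ! i @ u)" by blast
    have "\<forall>u. N + Nc ss' \<le> length u \<longrightarrow> f' u = f u"
      using shifted_deep[OF f'(2) iv f'(3)] fd by simp
    thus "f' = f" using recs_unique f'(1) fr by (metis K_set_iff)
  qed
  show "pi_act \<Gamma> \<omega> v a \<in> K_set \<Gamma> \<omega>" using eq fK by simp
  show "\<exists>N. \<forall>u. N \<le> length u \<longrightarrow> pi_act \<Gamma> \<omega> v a u = a (pre v u)" using eq fd by blast
qed


lemma K_prod:
  assumes "a \<in> K_set \<Gamma> \<rho>" "b \<in> K_set \<Gamma> \<rho>" "group \<Gamma>"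
    and "\<forall>x y z w. x \<in> carrier \<Gamma> \<longrightarrow> y \<in> carrier \<Gamma> \<longrightarrow> z \<in> carrier \<Gamma> \<longrightarrow> w \<in> carrier \<Gamma> \<longrightarrow>
      \<rho> (x \<otimes>\<^bsub>\<Gamma>\<^esub> z, y \<otimes>\<^bsub>\<Gamma>\<^esub> w) = \<rho> (x, y) \<otimes>\<^bsub>\<Gamma>\<^esub> \<rho> (z, w)"
  shows "(\<lambda>u. a u \<otimes>\<^bsub>\<Gamma>\<^esub> b u) \<in> K_set \<Gamma> \<rho>"
proof -
  have ca: "\<forall>u. a u \<in> carrier \<Gamma>" "\<forall>u. b u \<in> carrier \<Gamma>" using assms(1,2) by (auto simp: K_set_iff)
  have ra: "recs \<rho> a" "recs \<rho> b" using assms(1,2) by (auto simp: K_set_iff)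
  show ?thesis unfolding K_set_iff recs_def
  proof (intro conjI allI)
    fix u
    show "a u \<otimes>\<^bsub>\<Gamma>\<^esub> b u \<in> carrier \<Gamma>" using ca assms(3) by (simp add: group.is_monoid monoid.m_closed)
    show "a u \<otimes>\<^bsub>\<Gamma>\<^esub> b u = \<rho> (a (u @ [False]) \<otimes>\<^bsub>\<Gamma>\<^esub> b (u @ [False]), a (u @ [True]) \<otimes>\<^bsub>\<Gamma>\<^esub> b (u @ [True]))"
      using assms(4) ca ra unfolding recs_def by metis
  qed
qed

locale twist = group \<Gamma> for \<Gamma> :: "('g, 'm) monoid_scheme" (structure) +
  fixes \<omega> :: "'g \<times> 'g \<Rightarrow> 'g" and h :: 'g and B :: "bool list \<Rightarrow> 'g"
  assumes om_hom: "\<omega> \<in> hom (\<Gamma> \<times>\<times> \<Gamma>) \<Gamma>"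
    and h_c: "h \<in> carrier \<Gamma>"
    and B_c: "\<forall>u. B u \<in> carrier \<Gamma>"
    and B_rec: "\<forall>u. B u = h \<otimes> \<omega> (B (u @ [False]), B (u @ [True]))"
begin

lemma cancel1: "x \<in> carrier \<Gamma> \<Longrightarrow> y \<in> carrier \<Gamma> \<Longrightarrow> inv x \<otimes> (x \<otimes> y) = y"
  by (simp add: m_assoc[symmetric])
lemma cancel2: "x \<in> carrier \<Gamma> \<Longrightarrow> y \<in> carrier \<Gamma> \<Longrightarrow> x \<otimes> (inv x \<otimes> y) = y"
  by (simp add: m_assoc[symmetric])

lemma om_c: "x \<in> carrier \<Gamma> \<Longrightarrow> y \<in> carrier \<Gamma> \<Longrightarrow> \<omega> (x, y) \<in> carrier \<Gamma>"
  using om_hom unfolding hom_def by auto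

lemma om_mult: "x \<in> carrier \<Gamma> \<Longrightarrow> y \<in> carrier \<Gamma> \<Longrightarrow> z \<in> carrier \<Gamma> \<Longrightarrow> w \<in> carrier \<Gamma> \<Longrightarrow>
   \<omega> (x \<otimes> z, y \<otimes> w) = \<omega> (x, y) \<otimes> \<omega> (z, w)"
proof -
  assume a: "x \<in> carrier \<Gamma>" "y \<in> carrier \<Gamma>" "z \<in> carrier \<Gamma>" "w \<in> carrier \<Gamma>"
  have "\<omega> ((x, y) \<otimes>\<^bsub>\<Gamma> \<times>\<times> \<Gamma>\<^esub> (z, w)) = \<omega> (x, y) \<otimes> \<omega> (z, w)"
    using om_hom a unfolding hom_def by auto
  thus ?thesis by simp
qed

lemma om_one: "\<omega> (\<one>, \<one>) = \<one>"
proof -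
  have c: "\<omega> (\<one>, \<one>) \<in> carrier \<Gamma>" by (simp add: om_c)
  have "\<omega> (\<one>, \<one>) = \<omega> (\<one> \<otimes> \<one>, \<one> \<otimes> \<one>)" by simp
  also have "\<dots> = \<omega> (\<one>, \<one>) \<otimes> \<omega> (\<one>, \<one>)" by (rule om_mult) auto
  finally have e: "\<omega> (\<one>, \<one>) \<otimes> \<omega> (\<one>, \<one>) = \<omega> (\<one>, \<one>) \<otimes> \<one>" using c by simp
  show ?thesis by (rule l_cancel[OF e c one_closed c])
qed

lemma om_inv: "x \<in> carrier \<Gamma> \<Longrightarrow> y \<in> carrier \<Gamma> \<Longrightarrow> \<omega> (inv x, inv y) = inv \<omega> (x, y)"
proof -
  assume a: "x \<in> carrier \<Gamma>" "y \<in> carrier \<Gamma>"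
  have "\<omega> (inv x, inv y) \<otimes> \<omega> (x, y) = \<omega> (inv x \<otimes> x, inv y \<otimes> y)" using a by (intro om_mult[symmetric]) auto
  also have "\<dots> = \<one>" using a by (simp add: om_one)
  finally show ?thesis using a by (intro inv_equality[symmetric]) (auto simp: om_c)
qed

definition om' :: "'g \<times> 'g \<Rightarrow> 'g" where "om' p = h \<otimes> \<omega> p \<otimes> inv h"
definition rB :: "'g \<times> 'g \<Rightarrow> 'g" where "rB p = h \<otimes> \<omega> p"
definition cB :: "((nat \<Rightarrow> bool) \<Rightarrow> (nat \<Rightarrow> bool)) \<Rightarrow> bool list \<Rightarrow> 'g" where
  "cB v = (SOME f. recs rB f \<and> (\<exists>N. \<forall>u. N \<le> length u \<longrightarrow> f u = B (pre v u)))"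

lemma om'_c: "\<forall>x y. x \<in> carrier \<Gamma> \<longrightarrow> y \<in> carrier \<Gamma> \<longrightarrow> om' (x, y) \<in> carrier \<Gamma>"
  by (simp add: om'_def om_c h_c)

lemma om'_mult: "\<forall>x y z w. x \<in> carrier \<Gamma> \<longrightarrow> y \<in> carrier \<Gamma> \<longrightarrow> z \<in> carrier \<Gamma> \<longrightarrow> w \<in> carrier \<Gamma> \<longrightarrow>
      om' (x \<otimes> z, y \<otimes> w) = om' (x, y) \<otimes> om' (z, w)"
  by (simp add: om'_def om_mult om_c h_c m_assoc cancel1)

lemma om_mult': "\<forall>x y z w. x \<in> carrier \<Gamma> \<longrightarrow> y \<in> carrier \<Gamma> \<longrightarrow> z \<in> carrier \<Gamma> \<longrightarrow> w \<in> carrier \<Gamma> \<longrightarrow>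
      \<omega> (x \<otimes> z, y \<otimes> w) = \<omega> (x, y) \<otimes> \<omega> (z, w)"
  by (simp add: om_mult)

lemma cB_props:
  assumes "good v N M"
  shows "recs rB (cB v)" "\<exists>N'. \<forall>u. N' \<le> length u \<longrightarrow> cB v u = B (pre v u)" "cB v u \<in> carrier \<Gamma>"
proof -
  define g where "g = (\<lambda>u. B (pre v u))"
  have grec: "\<forall>u. N \<le> length u \<longrightarrow> g u = rB (g (u @ [False]), g (u @ [True]))"
  proof (intro allI impI)
    fix u :: "bool list" assume "N \<le> length u"
    hence "pre v (u @ [b]) = pre v u @ [b]" for b using good_append[OF assms] by blast
    thus "g u = rB (g (u @ [False]), g (u @ [True]))" unfolding g_def rB_def using B_rec by metis
  qed
  have ex: "\<exists>f. recs rB f \<and> (\<exists>N. \<forall>u. N \<le> length u \<longrightarrow> f u = B (pre v u))"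
    using extw_recs[OF grec] g_def by blast
  have *: "recs rB (cB v) \<and> (\<exists>N. \<forall>u. N \<le> length u \<longrightarrow> cB v u = B (pre v u))"
    unfolding cB_def by (rule someI_ex[OF ex])
  thus "recs rB (cB v)" "\<exists>N'. \<forall>u. N' \<le> length u \<longrightarrow> cB v u = B (pre v u)" by auto
  then obtain N' where "\<forall>u. N' \<le> length u \<longrightarrow> cB v u = B (pre v u)" by blast
  thus "cB v u \<in> carrier \<Gamma>"
    by (intro recs_closed[OF *[THEN conjunct1], where N=N']) (auto simp: B_c rB_def om_c h_c)
qed

lemma V_good_ex: "v \<in> V_set \<Longrightarrow> \<exists>N. good v N N"
  using V_good unfolding V_set_def by blast

lemma toK':
  assumes "a \<in> K_set \<Gamma> \<omega>" "recs rB c" "\<forall>u. c u \<in> carrier \<Gamma>"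
  shows "(\<lambda>u. B u \<otimes> a u \<otimes> inv (c u)) \<in> K_set \<Gamma> om'"
proof -
  have ca: "\<forall>u. a u \<in> carrier \<Gamma>" "recs \<omega> a" using assms(1) by (auto simp: K_set_iff)
  show ?thesis unfolding K_set_iff recs_def
  proof (intro conjI allI)
    fix u
    show "B u \<otimes> a u \<otimes> inv c u \<in> carrier \<Gamma>" using ca assms(3) B_c by simp
    define B0 B1 a0 a1 c0 c1 where "B0 = B (u @ [False])" "B1 = B (u @ [True])"
      "a0 = a (u @ [False])" "a1 = a (u @ [True])" "c0 = c (u @ [False])" "c1 = c (u @ [True])"
    have cc: "B0 \<in> carrier \<Gamma>" "B1 \<in> carrier \<Gamma>" "a0 \<in> carrier \<Gamma>" "a1 \<in> carrier \<Gamma>" "c0 \<in> carrier \<Gamma>" "c1 \<in> carrier \<Gamma>"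
      using B0_B1_a0_a1_c0_c1_def ca assms(3) B_c by auto
    have "B u \<otimes> a u \<otimes> inv c u = (h \<otimes> \<omega> (B0, B1)) \<otimes> \<omega> (a0, a1) \<otimes> inv (h \<otimes> \<omega> (c0, c1))"
      using B_rec ca(2) assms(2) B0_B1_a0_a1_c0_c1_def unfolding recs_def rB_def by metis
    also have "\<dots> = h \<otimes> (\<omega> (B0, B1) \<otimes> \<omega> (a0, a1) \<otimes> inv \<omega> (c0, c1)) \<otimes> inv h"
      using cc h_c by (simp add: m_assoc inv_mult_group om_c)
    also have "\<dots> = om' (B0 \<otimes> a0 \<otimes> inv c0, B1 \<otimes> a1 \<otimes> inv c1)"
      using cc h_c by (simp add: om'_def om_mult om_inv)
    finally show "B u \<otimes> a u \<otimes> inv c u = om' (B (u @ [False]) \<otimes> a (u @ [False]) \<otimes> inv c (u @ [False]),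
                B (u @ [True]) \<otimes> a (u @ [True]) \<otimes> inv c (u @ [True]))"
      using B0_B1_a0_a1_c0_c1_def by simp
  qed
qed

lemma toK:
  assumes "x \<in> K_set \<Gamma> om'" "recs rB c" "\<forall>u. c u \<in> carrier \<Gamma>"
  shows "(\<lambda>u. inv (B u) \<otimes> x u \<otimes> c u) \<in> K_set \<Gamma> \<omega>"
proof -
  have ca: "\<forall>u. x u \<in> carrier \<Gamma>" "recs om' x" using assms(1) by (auto simp: K_set_iff)
  show ?thesis unfolding K_set_iff recs_def
  proof (intro conjI allI)
    fix u
    show "inv (B u) \<otimes> x u \<otimes> c u \<in> carrier \<Gamma>" using ca assms(3) B_c by simp
    define B0 B1 a0 a1 c0 c1 where "B0 = B (u @ [False])" "B1 = B (u @ [True])"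
      "a0 = x (u @ [False])" "a1 = x (u @ [True])" "c0 = c (u @ [False])" "c1 = c (u @ [True])"
    have cc: "B0 \<in> carrier \<Gamma>" "B1 \<in> carrier \<Gamma>" "a0 \<in> carrier \<Gamma>" "a1 \<in> carrier \<Gamma>" "c0 \<in> carrier \<Gamma>" "c1 \<in> carrier \<Gamma>"
      using B0_B1_a0_a1_c0_c1_def ca assms(3) B_c by auto
    have "inv (B u) \<otimes> x u \<otimes> c u = inv (h \<otimes> \<omega> (B0, B1)) \<otimes> (h \<otimes> \<omega> (a0, a1) \<otimes> inv h) \<otimes> (h \<otimes> \<omega> (c0, c1))"
      using B_rec ca(2) assms(2) B0_B1_a0_a1_c0_c1_def unfolding recs_def rB_def om'_def by metis
    also have "\<dots> = inv \<omega> (B0, B1) \<otimes> \<omega> (a0, a1) \<otimes> \<omega> (c0, c1)"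
      using cc h_c by (simp add: m_assoc inv_mult_group om_c cancel1)
    also have "\<dots> = \<omega> (inv B0 \<otimes> a0 \<otimes> c0, inv B1 \<otimes> a1 \<otimes> c1)"
      using cc h_c by (simp add: om_mult om_inv)
    finally show "inv (B u) \<otimes> x u \<otimes> c u = \<omega> (inv (B (u @ [False])) \<otimes> x (u @ [False]) \<otimes> c (u @ [False]),
                inv (B (u @ [True])) \<otimes> x (u @ [True]) \<otimes> c (u @ [True]))"
      using B0_B1_a0_a1_c0_c1_def by simp
  qed
qed

end


lemma G_carrier: "carrier (G_grp \<Gamma> \<rho>) = K_set \<Gamma> \<rho> \<times> V_set"
  by (simp add: G_grp_def)

lemma G_mult: "(a, v) \<otimes>\<^bsub>G_grp \<Gamma> \<rho>\<^esub> (b, w) = (\<lambda>u. a u \<otimes>\<^bsub>\<Gamma>\<^esub> pi_act \<Gamma> \<rho> v b u, v \<circ> w)"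
  by (simp add: G_grp_def)

context twist
begin

definition Phi where "Phi = (\<lambda>(a, v). (\<lambda>u. B u \<otimes> a u \<otimes> inv (cB v u), v))"
definition Psi where "Psi = (\<lambda>(x, v). (\<lambda>u. inv (B u) \<otimes> x u \<otimes> cB v u, v))"

lemma cB_V:
  assumes "v \<in> V_set"
  shows "recs rB (cB v)" "\<exists>N'. \<forall>u. N' \<le> length u \<longrightarrow> cB v u = B (pre v u)" "\<forall>u. cB v u \<in> carrier \<Gamma>"
  using cB_props V_good_ex[OF assms] by blast+

lemma Phi_hom:
  assumes a: "a \<in> K_set \<Gamma> \<omega>" and a2: "a2 \<in> K_set \<Gamma> \<omega>" and v: "v \<in> V_set" and w: "w \<in> V_set"
  shows "Phi ((a, v) \<otimes>\<^bsub>G_grp \<Gamma> \<omega>\<^esub> (a2, w)) = Phi (a, v) \<otimes>\<^bsub>G_grp \<Gamma> om'\<^esub> Phi (a2, w)"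
proof -
  obtain Nv where gv: "good v Nv Nv" using V_good_ex[OF v] by blast
  obtain Nw where gw: "good w Nw Nw" using V_good_ex[OF w] by blast
  have gvw: "good (v \<circ> w) (Nv + Nw + Nv) (Nv + Nw)" using good_comp(1)[OF gv gw] .
  have ac: "\<forall>u. a u \<in> carrier \<Gamma>" "\<forall>u. a2 u \<in> carrier \<Gamma>" using a a2 by (auto simp: K_set_iff)
  have om_cl: "\<forall>x y. x \<in> carrier \<Gamma> \<longrightarrow> y \<in> carrier \<Gamma> \<longrightarrow> \<omega> (x, y) \<in> carrier \<Gamma>" by (simp add: om_c)
  have piK: "pi_act \<Gamma> \<omega> v a2 \<in> K_set \<Gamma> \<omega>" using pi_act_props(1)[OF om_cl a2 v] .
  obtain Np1 where np1: "\<forall>u. Np1 \<le> length u \<longrightarrow> pi_act \<Gamma> \<omega> v a2 u = a2 (pre v u)"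
    using pi_act_props(2)[OF om_cl a2 v] by blast
  have c1: "recs rB (cB v)" "\<forall>u. cB v u \<in> carrier \<Gamma>" using cB_V[OF v] by auto
  obtain Nc1 where nc1: "\<forall>u. Nc1 \<le> length u \<longrightarrow> cB v u = B (pre v u)" using cB_V[OF v] by blast
  have c2: "recs rB (cB w)" "\<forall>u. cB w u \<in> carrier \<Gamma>" using cB_V[OF w] by auto
  obtain Nc2 where nc2: "\<forall>u. Nc2 \<le> length u \<longrightarrow> cB w u = B (pre w u)" using cB_V[OF w] by blast
  have c3: "recs rB (cB (v \<circ> w))" "\<forall>u. cB (v \<circ> w) u \<in> carrier \<Gamma>" using cB_props[OF gvw] by auto
  obtain Nc3 where nc3: "\<forall>u. Nc3 \<le> length u \<longrightarrow> cB (v \<circ> w) u = B (pre (v \<circ> w) u)" using cB_props[OF gvw] by blast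
  define XX where "XX = (\<lambda>u. B u \<otimes> a u \<otimes> inv (cB v u))"
  define YY where "YY = (\<lambda>u. B u \<otimes> a2 u \<otimes> inv (cB w u))"
  have XK: "XX \<in> K_set \<Gamma> om'" unfolding XX_def using toK'[OF a c1] .
  have YK: "YY \<in> K_set \<Gamma> om'" unfolding YY_def using toK'[OF a2 c2] .
  have piK': "pi_act \<Gamma> om' v YY \<in> K_set \<Gamma> om'" using pi_act_props(1)[OF om'_c YK v] .
  obtain Np2 where np2: "\<forall>u. Np2 \<le> length u \<longrightarrow> pi_act \<Gamma> om' v YY u = YY (pre v u)"
    using pi_act_props(2)[OF om'_c YK v] by blast
  define L where "L = (\<lambda>u. B u \<otimes> (a u \<otimes> pi_act \<Gamma> \<omega> v a2 u) \<otimes> inv (cB (v \<circ> w) u))"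
  define R where "R = (\<lambda>u. XX u \<otimes> pi_act \<Gamma> om' v YY u)"
  have prodK: "(\<lambda>u. a u \<otimes> pi_act \<Gamma> \<omega> v a2 u) \<in> K_set \<Gamma> \<omega>"
    using K_prod[OF a piK is_group om_mult'] .
  have LK: "L \<in> K_set \<Gamma> om'" unfolding L_def using toK'[OF prodK c3] .
  have RK: "R \<in> K_set \<Gamma> om'" unfolding R_def using K_prod[OF XK piK' is_group om'_mult] .
  have deep: "L u = R u" if lu: "Nv + Nw + Nv + Np1 + Nc1 + Nc2 + Nc3 + Np2 \<le> length u" for u
  proof -
    define p where "p = pre v u"
    define q where "q = pre w p"
    have lp: "length u \<le> length p + Nv" using gv lu unfolding good_def p_def by auto
    have e1: "pi_act \<Gamma> \<omega> v a2 u = a2 p" using np1 lu p_def by simp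
    have e2: "cB (v \<circ> w) u = B q" using nc3 lu good_comp(2)[OF gv gw, of u] p_def q_def by simp
    have e3: "cB v u = B p" using nc1 lu p_def by simp
    have e4: "pi_act \<Gamma> om' v YY u = YY p" using np2 lu p_def by simp
    have e5: "cB w p = B q" using nc2 lu lp q_def by simp
    have "L u = B u \<otimes> (a u \<otimes> a2 p) \<otimes> inv (B q)" unfolding L_def using e1 e2 by simp
    also have "\<dots> = (B u \<otimes> a u \<otimes> inv (B p)) \<otimes> (B p \<otimes> a2 p \<otimes> inv (B q))"
      using B_c ac by (simp add: m_assoc cancel1)
    also have "\<dots> = R u" unfolding R_def XX_def using e3 e4 e5 YY_def by simp
    finally show ?thesis .
  qed
  have "L = R"
    by (rule recs_unique[where N="Nv + Nw + Nv + Np1 + Nc1 + Nc2 + Nc3 + Np2"])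
       (use LK RK deep in \<open>auto simp: K_set_iff\<close>)
  thus ?thesis unfolding L_def R_def XX_def YY_def by (simp add: Phi_def G_mult)
qed

lemma Phi_iso: "Phi \<in> iso (G_grp \<Gamma> \<omega>) (G_grp \<Gamma> om')"
proof -
  have maps: "Phi p \<in> K_set \<Gamma> om' \<times> V_set" if pin: "p \<in> K_set \<Gamma> \<omega> \<times> V_set" for p
  proof -
    obtain a v where p: "p = (a, v)" "a \<in> K_set \<Gamma> \<omega>" "v \<in> V_set" using pin by blast
    show ?thesis using p toK'[OF p(2) cB_V(1)[OF p(3)] cB_V(3)[OF p(3)]] unfolding Phi_def by simp
  qed
  have maps2: "Psi p \<in> K_set \<Gamma> \<omega> \<times> V_set" if pin: "p \<in> K_set \<Gamma> om' \<times> V_set" for p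
  proof -
    obtain a v where p: "p = (a, v)" "a \<in> K_set \<Gamma> om'" "v \<in> V_set" using pin by blast
    show ?thesis using p toK[OF p(2) cB_V(1)[OF p(3)] cB_V(3)[OF p(3)]] unfolding Psi_def by simp
  qed
  have inv1: "Psi (Phi p) = p" if pin: "p \<in> K_set \<Gamma> \<omega> \<times> V_set" for p
  proof -
    obtain a v where p: "p = (a, v)" "a \<in> K_set \<Gamma> \<omega>" "v \<in> V_set" using pin by blast
    have "\<forall>u. a u \<in> carrier \<Gamma>" using p(2) by (simp add: K_set_iff)
    thus ?thesis using p cB_V(3)[OF p(3)] B_c unfolding Phi_def Psi_def
      by (simp add: m_assoc cancel1 fun_eq_iff)
  qed
  have inv2: "Phi (Psi p) = p" if pin: "p \<in> K_set \<Gamma> om' \<times> V_set" for p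
  proof -
    obtain a v where p: "p = (a, v)" "a \<in> K_set \<Gamma> om'" "v \<in> V_set" using pin by blast
    have "\<forall>u. a u \<in> carrier \<Gamma>" using p(2) by (simp add: K_set_iff)
    thus ?thesis using p cB_V(3)[OF p(3)] B_c unfolding Phi_def Psi_def
      by (simp add: m_assoc cancel2 fun_eq_iff)
  qed
  have bij: "bij_betw Phi (K_set \<Gamma> \<omega> \<times> V_set) (K_set \<Gamma> om' \<times> V_set)"
  proof (rule bij_betw_byWitness[where f'=Psi])
    show "\<forall>a\<in>K_set \<Gamma> \<omega> \<times> V_set. Psi (Phi a) = a" using inv1 by blast
    show "\<forall>a\<in>K_set \<Gamma> om' \<times> V_set. Phi (Psi a) = a" using inv2 by blast
    show "Phi ` (K_set \<Gamma> \<omega> \<times> V_set) \<subseteq> K_set \<Gamma> om' \<times> V_set" using maps by (intro image_subsetI) blast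
    show "Psi ` (K_set \<Gamma> om' \<times> V_set) \<subseteq> K_set \<Gamma> \<omega> \<times> V_set" using maps2 by (intro image_subsetI) blast
  qed
  have hom: "Phi \<in> hom (G_grp \<Gamma> \<omega>) (G_grp \<Gamma> om')"
    unfolding hom_def G_carrier using maps Phi_hom by auto
  show ?thesis unfolding iso_def using hom bij by (simp add: G_carrier)
qed

end

theorem mainTheorem14:
  fixes \<Gamma> :: "('g, 'm) monoid_scheme" and \<omega> :: "'g \<times> 'g \<Rightarrow> 'g"
    and h :: 'g and b :: "bool list \<Rightarrow> 'g"
  assumes "group \<Gamma>"
    and "\<omega> \<in> hom (\<Gamma> \<times>\<times> \<Gamma>) \<Gamma>"
    and "h \<in> carrier \<Gamma>"
    and "\<forall>u. b u \<in> carrier \<Gamma>"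
    and "\<forall>u. b u = h \<otimes>\<^bsub>\<Gamma>\<^esub> \<omega> (b (u @ [False]), b (u @ [True]))"
  shows "G_grp \<Gamma> \<omega> \<cong> G_grp \<Gamma> (\<lambda>p. h \<otimes>\<^bsub>\<Gamma>\<^esub> \<omega> p \<otimes>\<^bsub>\<Gamma>\<^esub> inv\<^bsub>\<Gamma>\<^esub> h)"
proof -
  interpret T: twist \<Gamma> \<omega> h b
    by (intro twist.intro twist_axioms.intro assms)
  have e: "T.om' = (\<lambda>p. h \<otimes>\<^bsub>\<Gamma>\<^esub> \<omega> p \<otimes>\<^bsub>\<Gamma>\<^esub> inv\<^bsub>\<Gamma>\<^esub> h)"
    by (simp add: fun_eq_iff T.om'_def)
  show ?thesis using T.Phi_iso unfolding e is_iso_def by blast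
qed

end
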